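(* Let $\mathbf{x}$ be a mean zero random vector in $\mathbb{R}^k$ with law $P$ that is subgaussian with parameter $\sigma$, let $S=\mathbb{E}[\mathbf{x}\mathbf{x}^T]$, and let $\mathbf{x}^{(1)},\dots,\mathbf{x}^{(n)}$ be i.i.d. copies of $\mathbf{x}$ with empirical distribution $\hat P$ and $\hat S = \frac1n\sum_{r=1}^n\mathbf{x}^{(r)}(\mathbf{x}^{(r)})^T$. For $F\in\mathbb{R}^{k\times k}$ and $\mathbf{t}\in\mathbb{R}^k$ define $$\Delta(\mathbf{t},F\mid P) := \Big|\mathbb{E}\big[e^{i\mathbf{t}^TF\mathbf{x}}\big]e^{-\mathbf{t}^T\mathrm{diag}(FSF^T)\mathbf{t}} - \prod_{j=1}^k\mathbb{E}\big[e^{it_j(F\mathbf{x})_j}\big]e^{-\mathbf{t}^TFSF^T\mathbf{t}}\Big|,$$ $$\Delta(\mathbf{t},F\mid \hat P) := \Big|\frac1n\sum_{r=1}^n e^{i\mathbf{t}^TF\mathbf{x}^{(r)}}\,e^{-\mathbf{t}^T\mathrm{diag}(F\hat SF^T)\mathbf{t}} - \prod_{j=1}^k\Big(\frac1n\sum_{r=1}^n e^{it_j(F\mathbf{x}^{(r)})_j}\Big)e^{-\mathbf{t}^TF\hat SF^T\mathbf{t}}\Big|.$$ Let $\mathcal{F}:=\{F\in\mathbb{R}^{k\times k}:\|F\|\le1\}$ and $C_{\mathbf{t}} := \max(1,\|\mathbf{t}\|^2\mathrm{Tr}(S))$. Then for fixed $\mathbf{t}\in\mathbb{R}^k$, $$\sup_{F\in\mathcal{F}}\big|\Delta(\mathbf{t},F\mid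 P)-\Delta(\mathbf{t},F\mid\hat P)\big| = O_P\left(\|\mathbf{t}\|\sqrt{\frac{k\|S\|\max(k,\sigma^4\|S\|)\log(nC_{\mathbf{t}})}{n}}\right).$$
   Context: $\|\cdot\|$ is the Euclidean norm for vectors and the operator norm for matrices; $\mathrm{diag}(M)$ is the diagonal matrix with the diagonal of $M$. "Subgaussian with parameter $\sigma$" refers to the subgaussian Orlicz ($\psi_2$) norm bound $\sigma$. $X_n=O_P(a_n)$ means $X_n/a_n$ is stochastically bounded: for every $\epsilon>0$ there is a finite $M$ with $\sup_n\mathbb{P}(|X_n/a_n|>M)\le\epsilon$. *)

theory Defs
  imports "HOL-Probability.Probability"
begin

text \<open>Subgaussian with parameter sigma: the (vector) Orlicz psi_2 norm
  sup over unit u of the psi_2 norm of u.x, with psi_2 norm of Y being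
  inf of s > 0 with E exp(Y^2/s^2) \<le> 2, is at most sigma.\<close>
definition subgaussian :: "(real^'k) measure \<Rightarrow> real \<Rightarrow> bool" where
  "subgaussian P \<sigma> \<longleftrightarrow> \<sigma> \<ge> 0 \<and>
     (\<forall>u::real^'k. norm u = 1 \<longrightarrow> (\<forall>s. s > \<sigma> \<and> s > 0 \<longrightarrow>
        integrable P (\<lambda>x. exp ((u \<bullet> x / s)^2)) \<and>
        (\<integral>x. exp ((u \<bullet> x / s)^2) \<partial>P) \<le> 2))"

definition sec_mom :: "(real^'k) measure \<Rightarrow> real^'k^'k" where
  "sec_mom P = (\<chi> i j. \<integral>x. x$i * x$j \<partial>P)"

definition emp_sec_mom :: "(nat \<Rightarrow> real^'k) \<Rightarrow> nat \<Rightarrow> real^'k^'k" where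
  "emp_sec_mom xs n = (\<chi> i j. (1 / real n) * (\<Sum>r<n. xs r $ i * xs r $ j))"

definition qform :: "real^'k^'k \<Rightarrow> real^'k \<Rightarrow> real" where
  "qform A t = t \<bullet> (A *v t)"

definition qdiag :: "real^'k^'k \<Rightarrow> real^'k \<Rightarrow> real" where
  "qdiag A t = (\<Sum>j\<in>UNIV. A$j$j * (t$j)^2)"

definition Delta_pop :: "(real^'k) measure \<Rightarrow> real^'k \<Rightarrow> real^'k^'k \<Rightarrow> real" where
  "Delta_pop P t F =
    (let S = sec_mom P; G = F ** S ** transpose F in
     cmod ((\<integral>x. cis (t \<bullet> (F *v x)) \<partial>P) * complex_of_real (exp (- qdiag G t))
         - (\<Prod>j\<in>UNIV. \<integral>x. cis (t$j * (F *v x)$j) \<partial>P) * complex_of_real (exp (- qform G t))))"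

definition Delta_emp :: "(nat \<Rightarrow> real^'k) \<Rightarrow> nat \<Rightarrow> real^'k \<Rightarrow> real^'k^'k \<Rightarrow> real" where
  "Delta_emp xs n t F =
    (let S = emp_sec_mom xs n; G = F ** S ** transpose F in
     cmod ((1 / of_nat n) * (\<Sum>r<n. cis (t \<bullet> (F *v xs r))) * complex_of_real (exp (- qdiag G t))
         - (\<Prod>j\<in>UNIV. (1 / of_nat n) * (\<Sum>r<n. cis (t$j * (F *v xs r)$j)))
             * complex_of_real (exp (- qform G t))))"

definition rateA3 :: "(real^'k) measure \<Rightarrow> real \<Rightarrow> real^'k \<Rightarrow> nat \<Rightarrow> real" where
  "rateA3 P \<sigma> t n =
    (let S = sec_mom P; k = real CARD('k); nS = onorm (\<lambda>v. S *v v);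
         Ct = max 1 ((norm t)^2 * trace S) in
     norm t * sqrt (k * nS * max k (\<sigma>^4 * nS) * ln (real n * Ct) / real n))"

end

theory Submission
  imports Defs
begin


lemma exp_neg_lip:
  fixes A B :: real assumes "A \<ge> 0" "B \<ge> 0"
  shows "\<bar>exp (-A) - exp (-B)\<bar> \<le> \<bar>A - B\<bar>"
proof -
  have *: "exp (-a) - exp (-b) \<le> b - a" if "0 \<le> a" "a \<le> b" for a b :: real
  proof -
    have "exp (-a) - exp (-b) = exp (-a) * (1 - exp (-(b-a)))"
      by (simp add: algebra_simps flip: exp_add)
    also have "\<dots> \<le> 1 * (1 - exp (-(b-a)))"
      using that by (intro mult_right_mono) auto
    also have "\<dots> \<le> b - a" by (smt (verit) exp_ge_add_one_self[of "a-b"])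
    finally show ?thesis .
  qed
  show ?thesis
    using *[of A B] *[of B A] assms by (cases "A \<le> B") auto
qed

lemma norm_prod_diff_le:
  fixes b c :: "'i \<Rightarrow> complex"
  assumes "finite I" "\<And>i. i \<in> I \<Longrightarrow> norm (b i) \<le> 1" "\<And>i. i \<in> I \<Longrightarrow> norm (c i) \<le> 1"
  shows "norm ((\<Prod>i\<in>I. b i) - (\<Prod>i\<in>I. c i)) \<le> (\<Sum>i\<in>I. norm (b i - c i))"
  using assms
proof (induction I rule: finite_induct)
  case empty then show ?case by simp
next
  case (insert x F)
  have pb: "norm (\<Prod>i\<in>F. b i) \<le> 1" using insert
    by (simp add: prod_norm[symmetric]) (intro prod_le_1; auto)
  have "(\<Prod>i\<in>insert x F. b i) - (\<Prod>i\<in>insert x F. c i)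
       = (b x - c x) * (\<Prod>i\<in>F. b i) + c x * ((\<Prod>i\<in>F. b i) - (\<Prod>i\<in>F. c i))"
    using insert by (simp add: algebra_simps)
  also have "norm \<dots> \<le> norm (b x - c x) * norm (\<Prod>i\<in>F. b i) + norm (c x) * norm ((\<Prod>i\<in>F. b i) - (\<Prod>i\<in>F. c i))"
    by (metis norm_mult norm_triangle_ineq)
  also have "\<dots> \<le> norm (b x - c x) * 1 + 1 * (\<Sum>i\<in>F. norm (b i - c i))"
    using insert pb by (intro add_mono mult_mono) auto
  finally show ?case using insert by simp
qed

lemma key_ineq:
  fixes a a' :: complex and b b' :: "'i \<Rightarrow> complex" and A A' B B' :: real
  assumes "finite I" "norm a \<le> 1" "norm a' \<le> 1"
    "\<And>i. i \<in> I \<Longrightarrow> norm (b i) \<le> 1" "\<And>i. i \<in> I \<Longrightarrow> norm (b' i) \<le> 1"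
    "A \<ge> 0" "A' \<ge> 0" "B \<ge> 0" "B' \<ge> 0"
  shows "\<bar>cmod (a * complex_of_real (exp (-A)) - (\<Prod>i\<in>I. b i) * complex_of_real (exp (-B))) - cmod (a' * complex_of_real (exp (-A')) - (\<Prod>i\<in>I. b' i) * complex_of_real (exp (-B')))\<bar>
     \<le> cmod (a - a') + \<bar>A - A'\<bar> + (\<Sum>i\<in>I. cmod (b i - b' i)) + \<bar>B - B'\<bar>"
proof -
  have gen: "cmod (x * complex_of_real (exp (-C)) - x' * complex_of_real (exp (-C'))) \<le> cmod (x - x') + \<bar>C - C'\<bar>"
    if "norm x' \<le> 1" "C \<ge> 0" "C' \<ge> 0" for x x' :: complex and C C' :: real
  proof -
    have "x * complex_of_real (exp (-C)) - x' * complex_of_real (exp (-C')) = (x - x') * complex_of_real (exp (-C)) + x' * complex_of_real (exp (-C) - exp (-C'))"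
      by (simp add: algebra_simps)
    also have "cmod \<dots> \<le> cmod (x - x') * exp (-C) + cmod x' * \<bar>exp (-C) - exp (-C')\<bar>"
      by (metis (no_types, lifting) norm_mult norm_of_real norm_triangle_ineq abs_exp_cancel of_real_diff)
    also have "\<dots> \<le> cmod (x - x') * 1 + 1 * \<bar>C - C'\<bar>"
      using that exp_neg_lip[of C C'] by (intro add_mono mult_mono) auto
    finally show ?thesis by simp
  qed
  have pb': "norm (\<Prod>i\<in>I. b' i) \<le> 1" using assms
    by (simp add: prod_norm[symmetric]) (intro prod_le_1; auto)
  have "\<bar>cmod (a * complex_of_real (exp (-A)) - (\<Prod>i\<in>I. b i) * complex_of_real (exp (-B))) - cmod (a' * complex_of_real (exp (-A')) - (\<Prod>i\<in>I. b' i) * complex_of_real (exp (-B')))\<bar>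
     \<le> cmod ((a * complex_of_real (exp (-A)) - (\<Prod>i\<in>I. b i) * complex_of_real (exp (-B))) - (a' * complex_of_real (exp (-A')) - (\<Prod>i\<in>I. b' i) * complex_of_real (exp (-B'))))"
    by (rule norm_triangle_ineq3)
  also have "\<dots> \<le> cmod (a * complex_of_real (exp (-A)) - a' * complex_of_real (exp (-A'))) + cmod ((\<Prod>i\<in>I. b i) * complex_of_real (exp (-B)) - (\<Prod>i\<in>I. b' i) * complex_of_real (exp (-B')))"
    by (rule order_trans[OF _ norm_triangle_ineq4]) (simp add: algebra_simps)
  also have "\<dots> \<le> (cmod (a - a') + \<bar>A - A'\<bar>) + (cmod ((\<Prod>i\<in>I. b i) - (\<Prod>i\<in>I. b' i)) + \<bar>B - B'\<bar>)"
    using assms pb' by (intro add_mono gen) auto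
  also have "\<dots> \<le> (cmod (a - a') + \<bar>A - A'\<bar>) + ((\<Sum>i\<in>I. cmod (b i - b' i)) + \<bar>B - B'\<bar>)"
    using assms by (intro add_mono norm_prod_diff_le order_refl) auto
  finally show ?thesis by simp
qed


lemma inner_mv: "(t::real^'n) \<bullet> (F *v x) = (t v* F) \<bullet> x"
  by (simp add: dot_lmul_matrix)

lemma comp_mv: "(F *v x) $ j = row j F \<bullet> (x::real^'n)"
  by (simp add: matrix_vector_mult_def inner_vec_def row_def mult.commute)

lemma row_vm: "row j F = axis j 1 v* (F::real^'n^'m)"
proof -
  have "(axis j 1 v* F) $ i = F $ j $ i" for i
    by (simp add: vector_matrix_mult_def axis_def if_distrib[where f="\<lambda>x. x * _"] cong: if_cong)
  then show ?thesis by (simp add: vec_eq_iff row_def)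
qed

lemma qform_FSF: "qform (F ** S ** transpose F) t = (t v* F) \<bullet> (S *v (t v* F))"
proof -
  have "(F ** S ** transpose F) *v t = F *v (S *v (t v* F))"
    by (simp flip: matrix_vector_mul_assoc)
  then show ?thesis unfolding qform_def by (simp add: dot_lmul_matrix)
qed

lemma diag_entry: "(A::real^'n^'n) $ j $ j = axis j 1 \<bullet> (A *v axis j 1)"
  by (simp add: inner_axis' matrix_vector_mult_basis column_def)

lemma qdiag_FSF: "qdiag (F ** S ** transpose F) t =
   (\<Sum>j\<in>UNIV. (t$j *\<^sub>R row j F) \<bullet> (S *v (t$j *\<^sub>R row j F)))"
  unfolding qdiag_def
proof (rule sum.cong[OF refl])
  fix j
  have "(F ** S ** transpose F) $ j $ j = row j F \<bullet> (S *v row j F)"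
    using diag_entry[of "F ** S ** transpose F" j] qform_FSF[of F S "axis j 1"]
    by (simp add: row_vm qform_def)
  then show "(F ** S ** transpose F) $ j $ j * (t $ j)\<^sup>2 = (t$j *\<^sub>R row j F) \<bullet> (S *v (t$j *\<^sub>R row j F))"
    by (simp add: matrix_vector_mult_scaleR power2_eq_square algebra_simps)
qed

lemma norm_vm_le:
  assumes "onorm (\<lambda>v. F *v v) \<le> 1"
  shows "norm ((t::real^'n) v* (F::real^'m^'n)) \<le> norm t"
proof -
  let ?v = "t v* F"
  have "norm ?v ^ 2 = ?v \<bullet> ?v" by (simp add: power2_norm_eq_inner)
  also have "\<dots> = t \<bullet> (F *v ?v)" by (simp add: dot_lmul_matrix)
  also have "\<dots> \<le> norm t * norm (F *v ?v)" by (rule norm_cauchy_schwarz)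
  also have "\<dots> \<le> norm t * (onorm (\<lambda>v. F *v v) * norm ?v)"
    by (intro mult_left_mono onorm) auto
  also have "\<dots> \<le> norm t * (1 * norm ?v)"
    using assms by (intro mult_left_mono mult_right_mono) auto
  finally have "norm ?v * norm ?v \<le> norm t * norm ?v" by (simp add: power2_eq_square)
  then show ?thesis
    by (cases "norm ?v = 0") (auto simp: mult_le_cancel_right)
qed

lemma norm_row_le:
  assumes "onorm (\<lambda>v. F *v v) \<le> 1"
  shows "norm (row j (F::real^'n^'n)) \<le> 1"
  using norm_vm_le[OF assms, of "axis j 1"] by (simp add: row_vm norm_axis_1)

lemma norm_w_le:
  assumes "onorm (\<lambda>v. F *v v) \<le> 1"
  shows "norm ((t$j) *\<^sub>R row j (F::real^'n^'n)) \<le> norm t"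
proof -
  have "norm ((t$j) *\<^sub>R row j F) = \<bar>t$j\<bar> * norm (row j F)" by simp
  also have "\<dots> \<le> norm t * 1"
    using norm_row_le[OF assms, of j] component_le_norm_cart[of t j] by (intro mult_mono) auto
  finally show ?thesis by simp
qed

lemma qdiff_le:
  "\<bar>u \<bullet> (A *v u) - u \<bullet> (B *v u)\<bar> \<le> norm u ^ 2 * (\<Sum>i\<in>UNIV. \<Sum>j\<in>UNIV. \<bar>A$i$j - B$i$j\<bar>)"
  for u :: "real^'n"
proof -
  have "u \<bullet> (A *v u) - u \<bullet> (B *v u) = (\<Sum>i\<in>UNIV. \<Sum>j\<in>UNIV. u$i * (A$i$j - B$i$j) * u$j)"
    by (simp add: inner_vec_def matrix_vector_mult_def sum_distrib_left algebra_simps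
         flip: sum_subtractf)
  also have "\<bar>\<dots>\<bar> \<le> (\<Sum>i\<in>UNIV. \<Sum>j\<in>UNIV. \<bar>u$i * (A$i$j - B$i$j) * u$j\<bar>)"
    by (rule order_trans[OF sum_abs]) (intro sum_mono sum_abs)
  also have "\<dots> \<le> (\<Sum>i\<in>UNIV. \<Sum>j\<in>UNIV. norm u ^ 2 * \<bar>A$i$j - B$i$j\<bar>)"
  proof (intro sum_mono)
    fix i j
    have "\<bar>u$i * (A$i$j - B$i$j) * u$j\<bar> = (\<bar>u$i\<bar> * \<bar>u$j\<bar>) * \<bar>A$i$j - B$i$j\<bar>"
      by (simp add: abs_mult)
    also have "\<dots> \<le> (norm u * norm u) * \<bar>A$i$j - B$i$j\<bar>"
      by (intro mult_right_mono mult_mono component_le_norm_cart) auto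
    finally show "\<bar>u$i * (A$i$j - B$i$j) * u$j\<bar> \<le> norm u ^ 2 * \<bar>A$i$j - B$i$j\<bar>"
      by (simp add: power2_eq_square)
  qed
  finally show ?thesis by (simp add: sum_distrib_left)
qed


lemma emp_qform: "u \<bullet> (emp_sec_mom xs n *v u) = (1 / real n) * (\<Sum>r<n. (u \<bullet> xs r)^2)"
  for u :: "real^'k"
proof -
  have "u \<bullet> (emp_sec_mom xs n *v u) = (\<Sum>i\<in>UNIV. \<Sum>j\<in>UNIV. u$i * ((1 / real n) * (\<Sum>r<n. xs r $ i * xs r $ j)) * u$j)"
    by (simp add: inner_vec_def matrix_vector_mult_def emp_sec_mom_def sum_distrib_left mult_ac)
  also have "\<dots> = (1 / real n) * (\<Sum>r<n. (\<Sum>i\<in>UNIV. u$i * xs r $ i) * (\<Sum>j\<in>UNIV. u$j * xs r $ j))"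
    by (simp add: sum_distrib_left sum_distrib_right mult_ac sum.swap[of _ "{..<n}"])
  also have "\<dots> = (1 / real n) * (\<Sum>r<n. (u \<bullet> xs r)^2)"
    by (simp add: inner_vec_def power2_eq_square)
  finally show ?thesis .
qed

lemma emp_psd: "u \<bullet> (emp_sec_mom xs n *v u) \<ge> 0"
  by (simp add: emp_qform sum_nonneg)

lemma norm_ecf_le: "cmod ((1 / of_nat n) * (\<Sum>r<n. cis (f r))) \<le> 1"
proof (cases "n = 0")
  case False
  have "cmod (\<Sum>r<n. cis (f r)) \<le> (\<Sum>r<n. cmod (cis (f r)))" by (rule norm_sum)
  also have "\<dots> = real n" by simp
  finally show ?thesis using False by (simp add: norm_mult norm_divide field_simps)
qed simp

lemma norm_ecf_le': "cmod ((\<Sum>r<n. cis (f r)) / of_nat n) \<le> 1"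
  using norm_ecf_le[of n f] by simp

lemma det_bound:
  fixes P :: "(real^'k) measure" and t :: "real^'k" and F :: "real^'k^'k"
  assumes F: "onorm (\<lambda>v. F *v v) \<le> 1"
    and psd: "\<And>u. u \<bullet> (sec_mom P *v u) \<ge> 0"
    and cf1: "\<And>u. cmod (\<integral>x. cis (u \<bullet> x) \<partial>P) \<le> 1"
    and D: "\<And>u. norm u \<le> norm t \<Longrightarrow>
        cmod ((\<integral>x. cis (u \<bullet> x) \<partial>P) - (1 / of_nat n) * (\<Sum>r<n. cis (u \<bullet> xs r))) \<le> D"
    and E: "(\<Sum>i\<in>UNIV. \<Sum>j\<in>UNIV. \<bar>sec_mom P $i$j - emp_sec_mom xs n $i$j\<bar>) \<le> E"
  shows "\<bar>Delta_pop P t F - Delta_emp xs n t F\<bar> \<le> (real CARD('k) + 1) * (D + norm t ^ 2 * E)"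
proof -
  define S where "S = sec_mom P"
  define S' where "S' = emp_sec_mom xs n"
  define v where "v = t v* F"
  define w where "w j = (t$j) *\<^sub>R row j F" for j
  have E0: "0 \<le> (\<Sum>i\<in>UNIV. \<Sum>j\<in>UNIV. \<bar>S $i$j - S' $i$j\<bar>)" by (intro sum_nonneg) auto
  have ES: "(\<Sum>i\<in>UNIV. \<Sum>j\<in>UNIV. \<bar>S $i$j - S' $i$j\<bar>) \<le> E" using E by (simp add: S_def S'_def)
  have nv: "norm v \<le> norm t" unfolding v_def by (rule norm_vm_le[OF F])
  have nw: "norm (w j) \<le> norm t" for j unfolding w_def by (rule norm_w_le[OF F])
  have Q: "\<bar>u \<bullet> (S *v u) - u \<bullet> (S' *v u)\<bar> \<le> norm t ^ 2 * E" if "norm u \<le> norm t" for u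
  proof -
    have "\<bar>u \<bullet> (S *v u) - u \<bullet> (S' *v u)\<bar> \<le> norm u ^ 2 * (\<Sum>i\<in>UNIV. \<Sum>j\<in>UNIV. \<bar>S $i$j - S' $i$j\<bar>)"
      by (rule qdiff_le)
    also have "\<dots> \<le> norm t ^ 2 * E"
      using that E0 ES by (intro mult_mono power_mono) auto
    finally show ?thesis .
  qed
  have D0: "0 \<le> D" using D[of 0] by (smt (verit) norm_ge_zero norm_zero)
  have E0': "0 \<le> E" using E0 ES by linarith
  have pop: "Delta_pop P t F = cmod ((\<integral>x. cis (v \<bullet> x) \<partial>P) * complex_of_real (exp (- (\<Sum>j\<in>UNIV. w j \<bullet> (S *v w j))))
         - (\<Prod>j\<in>UNIV. \<integral>x. cis (w j \<bullet> x) \<partial>P) * complex_of_real (exp (- (v \<bullet> (S *v v)))))"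
    unfolding Delta_pop_def Let_def S_def[symmetric] qdiag_FSF qform_FSF
    by (simp add: inner_mv comp_mv w_def v_def)
  have emp: "Delta_emp xs n t F = cmod ((1 / of_nat n) * (\<Sum>r<n. cis (v \<bullet> xs r)) * complex_of_real (exp (- (\<Sum>j\<in>UNIV. w j \<bullet> (S' *v w j))))
         - (\<Prod>j\<in>UNIV. (1 / of_nat n) * (\<Sum>r<n. cis (w j \<bullet> xs r))) * complex_of_real (exp (- (v \<bullet> (S' *v v)))))"
    unfolding Delta_emp_def Let_def S'_def[symmetric] qdiag_FSF qform_FSF
    by (simp add: inner_mv comp_mv w_def v_def)
  have "\<bar>Delta_pop P t F - Delta_emp xs n t F\<bar> \<le>
      cmod ((\<integral>x. cis (v \<bullet> x) \<partial>P) - (1 / of_nat n) * (\<Sum>r<n. cis (v \<bullet> xs r)))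
      + \<bar>(\<Sum>j\<in>UNIV. w j \<bullet> (S *v w j)) - (\<Sum>j\<in>UNIV. w j \<bullet> (S' *v w j))\<bar>
      + (\<Sum>j\<in>UNIV. cmod ((\<integral>x. cis (w j \<bullet> x) \<partial>P) - (1 / of_nat n) * (\<Sum>r<n. cis (w j \<bullet> xs r))))
      + \<bar>v \<bullet> (S *v v) - v \<bullet> (S' *v v)\<bar>"
    unfolding pop emp
    by (intro key_ineq) (auto simp: cf1 norm_ecf_le norm_ecf_le' emp_psd S'_def S_def psd intro!: sum_nonneg)
  also have "\<dots> \<le> D + (\<Sum>j\<in>(UNIV::'k set). norm t ^ 2 * E) + (\<Sum>j\<in>(UNIV::'k set). D) + norm t ^ 2 * E"
  proof (intro add_mono D nv Q sum_mono)
    show "\<bar>(\<Sum>j\<in>UNIV. w j \<bullet> (S *v w j)) - (\<Sum>j\<in>UNIV. w j \<bullet> (S' *v w j))\<bar> \<le> (\<Sum>j\<in>(UNIV::'k set). norm t ^ 2 * E)"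
    proof -
      have "\<bar>(\<Sum>j\<in>UNIV. w j \<bullet> (S *v w j)) - (\<Sum>j\<in>UNIV. w j \<bullet> (S' *v w j))\<bar>
         \<le> (\<Sum>j\<in>UNIV. \<bar>w j \<bullet> (S *v w j) - w j \<bullet> (S' *v w j)\<bar>)"
        by (simp only: sum_subtractf[symmetric]) (rule sum_abs)
      also have "\<dots> \<le> (\<Sum>j\<in>(UNIV::'k set). norm t ^ 2 * E)"
        by (intro sum_mono Q nw)
      finally show ?thesis .
    qed
  qed (use nw in auto)
  also have "\<dots> = (real CARD('k) + 1) * (D + norm t ^ 2 * E)"
    by (simp add: algebra_simps)
  finally show ?thesis .
qed


lemma borel_measurable_cis[measurable]:
  fixes f :: "'a \<Rightarrow> real"
  assumes [measurable]: "f \<in> borel_measurable N"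
  shows "(\<lambda>x. cis (f x)) \<in> borel_measurable N"
  unfolding cis_conv_exp by measurable

locale sett = prob_space M for M :: "'a measure" +
  fixes X :: "nat \<Rightarrow> 'a \<Rightarrow> real^'k" and P :: "(real^'k) measure"
  assumes Xm[measurable]: "\<And>r. X r \<in> borel_measurable M"
    and ind: "indep_vars (\<lambda>_. borel) X UNIV"
    and dis: "\<And>r. distr M borel (X r) = P"
begin

lemma sets_P[measurable_cong]: "sets P = sets borel"
  using dis[of 0] by (metis sets_distr)

lemma space_P: "space P = UNIV"
  using dis[of 0] by (metis space_distr space_borel)

lemma P_prob: "prob_space P"
  using dis[of 0] prob_space_distr[OF Xm[of 0]] by simp

lemma integral_X:
  fixes f :: "real^'k \<Rightarrow> 'b::{banach,second_countable_topology}"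
  assumes [measurable]: "f \<in> borel_measurable borel"
  shows "(\<integral>\<omega>. f (X r \<omega>) \<partial>M) = (\<integral>x. f x \<partial>P)"
  using integral_distr[of "X r" M borel f] dis[of r] by simp

lemma integrable_X:
  fixes f :: "real^'k \<Rightarrow> 'b::{banach,second_countable_topology}"
  assumes [measurable]: "f \<in> borel_measurable borel"
  shows "integrable M (\<lambda>\<omega>. f (X r \<omega>)) \<longleftrightarrow> integrable P f"
  using integrable_distr_eq[of "X r" M borel f] dis[of r] by simp

lemma hoeff:
  fixes f :: "real^'k \<Rightarrow> real"
  assumes fm[measurable]: "f \<in> borel_measurable borel" and fb: "\<And>x. \<bar>f x\<bar> \<le> 1"
    and n: "n > 0" and s: "s \<ge> 0"
  shows "prob {\<omega>\<in>space M. \<bar>(\<Sum>r<n. f (X r \<omega>)) - real n * (\<integral>x. f x \<partial>P)\<bar> \<ge> real n * s}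
     \<le> 2 * exp (- (real n * s^2 / 2))"
proof -
  have intf: "integrable P f"
  proof -
    interpret Pp: prob_space P by (rule P_prob)
    show ?thesis
      by (rule Pp.integrable_const_bound[where B=1]) (use fb in auto)
  qed
  interpret H: Hoeffding_ineq M "{..<n}" "\<lambda>r \<omega>. f (X r \<omega>)" "\<lambda>_. -1" "\<lambda>_. 1"
     "\<Sum>r<n. expectation (\<lambda>\<omega>. f (X r \<omega>))"
  proof unfold_locales
    show "indep_vars (\<lambda>_. borel) (\<lambda>r \<omega>. f (X r \<omega>)) {..<n}"
      by (rule indep_vars_compose2[OF indep_vars_subset[OF ind]]) auto
    show "AE x in M. f (X i x) \<in> {- 1..1}" for i
      using fb by (auto simp: abs_le_iff)
  qed auto
  have mu: "(\<Sum>r<n. expectation (\<lambda>\<omega>. f (X r \<omega>))) = real n * (\<integral>x. f x \<partial>P)"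
    by (simp add: integral_X)
  have "prob {\<omega>\<in>space M. \<bar>(\<Sum>r<n. f (X r \<omega>)) - real n * (\<integral>x. f x \<partial>P)\<bar> \<ge> real n * s}
     \<le> 2 * exp (-2 * (real n * s)\<^sup>2 / (\<Sum>i<n. (1 - (-1::real))\<^sup>2))"
    using H.Hoeffding_ineq_abs_ge[of "real n * s"] n s by (simp add: mu)
  also have "-2 * (real n * s)\<^sup>2 / (\<Sum>i<n. (1 - (-1::real))\<^sup>2) = - (real n * s^2 / 2)"
    using n by (simp add: power2_eq_square field_simps)
  finally show ?thesis .
qed

lemma hoeff_cis:
  assumes n: "n > 0" and s: "s \<ge> 0"
  shows "prob {\<omega>\<in>space M. cmod ((\<integral>x. cis (u \<bullet> x) \<partial>P) - (1 / of_nat n) * (\<Sum>r<n. cis (u \<bullet> X r \<omega>))) \<ge> 2 * s}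
     \<le> 4 * exp (- (real n * s^2 / 2))"
proof -
  interpret Pp: prob_space P by (rule P_prob)
  have ic: "integrable P (\<lambda>x. cis (u \<bullet> x))"
    by (rule Pp.integrable_const_bound[where B=1]) auto
  define Ar where "Ar = {\<omega>\<in>space M. \<bar>(\<Sum>r<n. cos (u \<bullet> X r \<omega>)) - real n * (\<integral>x. cos (u \<bullet> x) \<partial>P)\<bar> \<ge> real n * s}"
  define Ai where "Ai = {\<omega>\<in>space M. \<bar>(\<Sum>r<n. sin (u \<bullet> X r \<omega>)) - real n * (\<integral>x. sin (u \<bullet> x) \<partial>P)\<bar> \<ge> real n * s}"
  have sub: "{\<omega>\<in>space M. cmod ((\<integral>x. cis (u \<bullet> x) \<partial>P) - (1 / of_nat n) * (\<Sum>r<n. cis (u \<bullet> X r \<omega>))) \<ge> 2 * s}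
     \<subseteq> Ar \<union> Ai"
  proof
    fix \<omega> assume "\<omega> \<in> {\<omega>\<in>space M. cmod ((\<integral>x. cis (u \<bullet> x) \<partial>P) - (1 / of_nat n) * (\<Sum>r<n. cis (u \<bullet> X r \<omega>))) \<ge> 2 * s}"
    then have om: "\<omega> \<in> space M" and big: "cmod ((\<integral>x. cis (u \<bullet> x) \<partial>P) - (1 / of_nat n) * (\<Sum>r<n. cis (u \<bullet> X r \<omega>))) \<ge> 2 * s"
      by auto
    define z where "z = (\<integral>x. cis (u \<bullet> x) \<partial>P) - (1 / of_nat n) * (\<Sum>r<n. cis (u \<bullet> X r \<omega>))"
    have Rez: "Re z = (\<integral>x. cos (u \<bullet> x) \<partial>P) - (1 / real n) * (\<Sum>r<n. cos (u \<bullet> X r \<omega>))"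
      unfolding z_def using integral_Re[OF ic] by (simp add: Re_divide_of_nat)
    have Imz: "Im z = (\<integral>x. sin (u \<bullet> x) \<partial>P) - (1 / real n) * (\<Sum>r<n. sin (u \<bullet> X r \<omega>))"
      unfolding z_def using integral_Im[OF ic] by (simp add: Im_divide_of_nat)
    have "2 * s \<le> \<bar>Re z\<bar> + \<bar>Im z\<bar>" using big cmod_le[of z] unfolding z_def by linarith
    then have "\<bar>Re z\<bar> \<ge> s \<or> \<bar>Im z\<bar> \<ge> s" by linarith
    moreover have "\<bar>Re z\<bar> \<ge> s \<Longrightarrow> \<omega> \<in> Ar"
    proof -
      assume "\<bar>Re z\<bar> \<ge> s"
      then have "real n * s \<le> real n * \<bar>Re z\<bar>" using n by (intro mult_left_mono) auto
      also have "real n * \<bar>Re z\<bar> = \<bar>(\<Sum>r<n. cos (u \<bullet> X r \<omega>)) - real n * (\<integral>x. cos (u \<bullet> x) \<partial>P)\<bar>"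
        unfolding Rez using n by (simp add: abs_mult[symmetric] field_simps abs_minus_commute)
      finally show ?thesis using om by (simp add: Ar_def)
    qed
    moreover have "\<bar>Im z\<bar> \<ge> s \<Longrightarrow> \<omega> \<in> Ai"
    proof -
      assume "\<bar>Im z\<bar> \<ge> s"
      then have "real n * s \<le> real n * \<bar>Im z\<bar>" using n by (intro mult_left_mono) auto
      also have "real n * \<bar>Im z\<bar> = \<bar>(\<Sum>r<n. sin (u \<bullet> X r \<omega>)) - real n * (\<integral>x. sin (u \<bullet> x) \<partial>P)\<bar>"
        unfolding Imz using n by (simp add: abs_mult[symmetric] field_simps abs_minus_commute)
      finally show ?thesis using om by (simp add: Ai_def)
    qed
    ultimately show "\<omega> \<in> Ar \<union> Ai" by blast
  qed
  have "prob {\<omega>\<in>space M. cmod ((\<integral>x. cis (u \<bullet> x) \<partial>P) - (1 / of_nat n) * (\<Sum>r<n. cis (u \<bullet> X r \<omega>))) \<ge> 2 * s}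
      \<le> prob (Ar \<union> Ai)"
    by (rule finite_measure_mono[OF sub]) (auto simp: Ar_def Ai_def)
  also have "\<dots> \<le> prob Ar + prob Ai"
    by (rule measure_Un_le) (auto simp: Ar_def Ai_def)
  also have "\<dots> \<le> 2 * exp (- (real n * s^2 / 2)) + 2 * exp (- (real n * s^2 / 2))"
    unfolding Ar_def Ai_def by (intro add_mono hoeff n s) auto
  finally show ?thesis by simp
qed

lemma markov_norm:
  assumes ix: "integrable P (\<lambda>x. x)" and n: "n > 0" and c: "c > 0"
  shows "prob {\<omega>\<in>space M. (1 / real n) * (\<Sum>r<n. norm (X r \<omega>)) \<ge> c} \<le> (\<integral>x. norm x \<partial>P) / c"
proof -
  have inorm: "integrable P (\<lambda>x. norm x)" using integrable_norm[OF ix] .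
  have iM: "integrable M (\<lambda>\<omega>. norm (X r \<omega>))" for r
    using inorm by (subst integrable_X) auto
  have "prob {\<omega>\<in>space M. (1 / real n) * (\<Sum>r<n. norm (X r \<omega>)) \<ge> c}
     \<le> (\<integral>\<omega>. (1 / real n) * (\<Sum>r<n. norm (X r \<omega>)) \<partial>M) / c"
    by (rule integral_Markov_inequality_measure[where A="space M"]) (use iM c in \<open>auto intro!: AE_I2 sum_nonneg divide_nonneg_nonneg\<close>)
  also have "(\<integral>\<omega>. (1 / real n) * (\<Sum>r<n. norm (X r \<omega>)) \<partial>M) = (\<integral>x. norm x \<partial>P)"
    using n iM by (simp add: integral_X)
  finally show ?thesis .
qed

lemma cheb:
  fixes g :: "real^'k \<Rightarrow> real"
  assumes gm[measurable]: "g \<in> borel_measurable borel" and ig2: "integrable P (\<lambda>x. (g x)^2)"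
    and n: "n > 0" and a: "a > 0"
  shows "prob {\<omega>\<in>space M. \<bar>(1 / real n) * (\<Sum>r<n. g (X r \<omega>)) - (\<integral>x. g x \<partial>P)\<bar> \<ge> a}
     \<le> (\<integral>x. (g x - (\<integral>x. g x \<partial>P))^2 \<partial>P) / (real n * a^2)"
proof -
  interpret Pp: prob_space P by (rule P_prob)
  define \<mu> where "\<mu> = (\<integral>x. g x \<partial>P)"
  define V where "V = (\<integral>x. (g x - \<mu>)^2 \<partial>P)"
  define Y where "Y r \<omega> = g (X r \<omega>) - \<mu>" for r \<omega>
  have Ym[measurable]: "Y r \<in> borel_measurable M" for r unfolding Y_def by measurable
  have ig: "integrable P g"
    by (rule Pp.square_integrable_imp_integrable[OF _ ig2]) (simp add: measurable_cong_sets[OF sets_P])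
  have igc2: "integrable P (\<lambda>x. (g x - \<mu>)^2)"
    using ig2 ig by (simp add: power2_diff)
  have iY2: "integrable M (\<lambda>\<omega>. (Y r \<omega>)^2)" for r
    unfolding Y_def using igc2 by (subst integrable_X[where f="\<lambda>x. (g x - \<mu>)^2"]) auto
  have iY: "integrable M (Y r)" for r
    unfolding Y_def using ig by (subst integrable_X[where f="\<lambda>x. g x - \<mu>"]) auto
  have EY: "(\<integral>\<omega>. Y r \<omega> \<partial>M) = 0" for r
  proof -
    have "(\<integral>\<omega>. Y r \<omega> \<partial>M) = (\<integral>x. g x - \<mu> \<partial>P)"
      unfolding Y_def by (rule integral_X) auto
    also have "\<dots> = (\<integral>x. g x \<partial>P) - \<mu>"
      using ig by (subst Bochner_Integration.integral_diff) (auto simp: Pp.prob_space)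
    finally show ?thesis by (simp add: \<mu>_def)
  qed
  have EY2: "(\<integral>\<omega>. (Y r \<omega>)^2 \<partial>M) = V" for r
    unfolding Y_def V_def by (rule integral_X) auto
  have iYY: "integrable M (\<lambda>\<omega>. Y r \<omega> * Y s \<omega>)" for r s
  proof (rule Bochner_Integration.integrable_bound[where f="\<lambda>\<omega>. (Y r \<omega>)^2 + (Y s \<omega>)^2"])
    show "integrable M (\<lambda>\<omega>. (Y r \<omega>)^2 + (Y s \<omega>)^2)" using iY2 by auto
    show "AE \<omega> in M. norm (Y r \<omega> * Y s \<omega>) \<le> norm ((Y r \<omega>)^2 + (Y s \<omega>)^2)"
    proof (intro AE_I2)
      fix \<omega>
      have "0 \<le> (\<bar>Y r \<omega>\<bar> - \<bar>Y s \<omega>\<bar>)^2" by simp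
      then show "norm (Y r \<omega> * Y s \<omega>) \<le> norm ((Y r \<omega>)^2 + (Y s \<omega>)^2)"
        by (simp add: abs_mult power2_eq_square algebra_simps) (smt (verit) zero_le_square abs_ge_zero mult_nonneg_nonneg)
    qed
  qed auto
  have EYY: "(\<integral>\<omega>. Y r \<omega> * Y s \<omega> \<partial>M) = (if r = s then V else 0)" for r s
  proof (cases "r = s")
    case True then show ?thesis using EY2[of r] by (simp add: power2_eq_square)
  next
    case False
    have indYs: "indep_vars (\<lambda>_. borel) Y {r, s}"
      unfolding Y_def by (rule indep_vars_compose2[OF indep_vars_subset[OF ind]]) auto
    have "(\<integral>\<omega>. (\<Prod>i\<in>{r,s}. Y i \<omega>) \<partial>M) = (\<Prod>i\<in>{r,s}. \<integral>\<omega>. Y i \<omega> \<partial>M)"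
      by (rule indep_vars_lebesgue_integral) (use indYs iY in auto)
    then show ?thesis using False by (simp add: EY)
  qed
  have sq: "(\<Sum>r<n. Y r \<omega>)^2 = (\<Sum>r<n. \<Sum>s<n. Y r \<omega> * Y s \<omega>)" for \<omega>
    by (simp add: power2_eq_square sum_product)
  have ES: "(\<integral>\<omega>. (\<Sum>r<n. Y r \<omega>)^2 \<partial>M) = real n * V"
    unfolding sq using iYY by (simp add: EYY)
  have iS: "integrable M (\<lambda>\<omega>. (\<Sum>r<n. Y r \<omega>)^2)"
    unfolding sq using iYY by auto
  have ev: "{\<omega>\<in>space M. \<bar>(1 / real n) * (\<Sum>r<n. g (X r \<omega>)) - \<mu>\<bar> \<ge> a}
      = {\<omega>\<in>space M. (\<Sum>r<n. Y r \<omega>)^2 \<ge> (real n * a)^2}"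
  proof -
    have "\<bar>(1 / real n) * (\<Sum>r<n. g (X r \<omega>)) - \<mu>\<bar> \<ge> a \<longleftrightarrow> (\<Sum>r<n. Y r \<omega>)^2 \<ge> (real n * a)^2" for \<omega>
    proof -
      have e1: "(\<Sum>r<n. Y r \<omega>) = real n * ((1 / real n) * (\<Sum>r<n. g (X r \<omega>)) - \<mu>)"
        using n by (simp add: Y_def sum_subtractf field_simps)
      have "\<bar>(1 / real n) * (\<Sum>r<n. g (X r \<omega>)) - \<mu>\<bar> \<ge> a \<longleftrightarrow> real n * a \<le> \<bar>\<Sum>r<n. Y r \<omega>\<bar>"
        unfolding e1 using n by (simp add: abs_mult)
      also have "\<dots> \<longleftrightarrow> (real n * a)^2 \<le> (\<Sum>r<n. Y r \<omega>)^2"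
        using n a by (metis abs_of_nonneg abs_le_square_iff less_imp_le mult_nonneg_nonneg of_nat_0_le_iff)
      finally show ?thesis .
    qed
    then show ?thesis by auto
  qed
  have "prob {\<omega>\<in>space M. (\<Sum>r<n. Y r \<omega>)^2 \<ge> (real n * a)^2} \<le> (\<integral>\<omega>. (\<Sum>r<n. Y r \<omega>)^2 \<partial>M) / (real n * a)^2"
    by (rule integral_Markov_inequality_measure[where A="space M"]) (use iS n a in auto)
  also have "\<dots> = V / (real n * a^2)"
    unfolding ES using n a by (simp add: power2_eq_square field_simps)
  finally show ?thesis using ev by (simp add: \<mu>_def V_def)
qed

lemma meas_test1: "(\<lambda>x::real^'k. cis (u \<bullet> x)) \<in> borel_measurable borel" by measurable
lemma meas_test2: "(\<lambda>x::real^'k. x $ i * x $ j) \<in> borel_measurable borel" by measurable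
lemma meas_test3: "{\<omega>\<in>space M. cmod (c - (1 / of_nat n) * (\<Sum>r<n. cis (u \<bullet> X r \<omega>))) \<ge> s} \<in> sets M" by measurable

end


lemma quart_le_exp: "(y::real)^4 \<le> 4 * exp (y^2)"
proof -
  have "y^2 / 2 \<le> exp (y^2 / 2)" using exp_ge_add_one_self[of "y^2/2"] by linarith
  then have "(y^2 / 2)^2 \<le> (exp (y^2 / 2))^2" by (intro power_mono) auto
  also have "(exp (y^2 / 2))^2 = exp (y^2)" by (simp flip: exp_double)
  finally show ?thesis by (simp add: power2_eq_square power4_eq_xxxx field_simps)
qed

context
  fixes P :: "(real^'k) measure" and \<sigma> :: real
  assumes Pp: "prob_space P" and sP: "sets P = sets borel" and sg: "subgaussian P \<sigma>"
begin

lemma mP: assumes "f \<in> borel_measurable borel" shows "f \<in> borel_measurable P"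
  by (metis assms measurable_cong_sets sP)

lemma sg_fourth: "integrable P (\<lambda>x. (x$i)^4)"
proof -
  define s where "s = \<sigma> + 1"
  have sg': "\<sigma> \<ge> 0" using sg by (simp add: subgaussian_def)
  have s: "s > \<sigma>" "s > 0" using sg' by (auto simp: s_def)
  have ie: "integrable P (\<lambda>x. exp ((axis i 1 \<bullet> x / s)^2))"
    using sg s unfolding subgaussian_def by (auto simp: norm_axis_1)
  then have ie': "integrable P (\<lambda>x. 4 * s^4 * exp ((x$i / s)^2))"
    by (simp add: inner_axis')
  show ?thesis
  proof (rule Bochner_Integration.integrable_bound[OF ie'])
    show "AE x in P. norm ((x$i)^4) \<le> norm (4 * s^4 * exp ((x$i / s)^2))"
    proof (intro AE_I2)
      fix x :: "real^'k"
      have "(x$i)^4 = s^4 * (x$i / s)^4" using s by (simp add: field_simps)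
      also have "\<dots> \<le> s^4 * (4 * exp ((x$i / s)^2))"
        by (intro mult_left_mono quart_le_exp) auto
      finally show "norm ((x$i)^4) \<le> norm (4 * s^4 * exp ((x$i / s)^2))"
        using s by simp
    qed
  qed (rule mP, measurable)
qed

lemma sg_prod2: "integrable P (\<lambda>x. (x$i * x$j)^2)"
proof (rule Bochner_Integration.integrable_bound[where f="\<lambda>x. (x$i)^4 + (x$j)^4"])
  show "integrable P (\<lambda>x. (x$i)^4 + (x$j)^4)" using sg_fourth by auto
  show "AE x in P. norm ((x$i * x$j)^2) \<le> norm ((x$i)^4 + (x$j)^4)"
  proof (intro AE_I2)
    fix x :: "real^'k"
    have "2 * (x$i)^2 * (x$j)^2 \<le> ((x$i)^2)^2 + ((x$j)^2)^2" by (rule sum_squares_bound)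
    moreover have "0 \<le> (x$i)^2 * (x$j)^2" by simp
    moreover have "(x$i * x$j)^2 = (x$i)^2 * (x$j)^2" by (simp add: power_mult_distrib)
    moreover have "(x$i)^4 = ((x$i)^2)^2" "(x$j)^4 = ((x$j)^2)^2" by simp_all
    ultimately have "(x$i * x$j)^2 \<le> (x$i)^4 + (x$j)^4"
      by linarith
    then show "norm ((x$i * x$j)^2) \<le> norm ((x$i)^4 + (x$j)^4)"
      by simp
  qed
qed (rule mP, measurable)

lemma sg_prod: "integrable P (\<lambda>x. x$i * x$j)"
proof (rule Bochner_Integration.integrable_bound[where f="\<lambda>x. 1 + (x$i * x$j)^2"])
  interpret prob_space P by (rule Pp)
  show "integrable P (\<lambda>x. 1 + (x$i * x$j)^2)" using sg_prod2 by auto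
  show "AE x in P. norm (x$i * x$j) \<le> norm (1 + (x$i * x$j)^2)"
  proof (intro AE_I2)
    fix x :: "real^'k"
    have "0 \<le> (\<bar>x$i * x$j\<bar> - 1)^2" by simp
    then show "norm (x$i * x$j) \<le> norm (1 + (x$i * x$j)^2)"
      by (simp add: power2_eq_square algebra_simps)
  qed
qed (rule mP, measurable)

lemma sec_psd: "u \<bullet> (sec_mom P *v u) \<ge> 0"
proof -
  have "u \<bullet> (sec_mom P *v u) = (\<Sum>i\<in>UNIV. \<Sum>j\<in>UNIV. u$i * ((\<integral>x. x$i * x$j \<partial>P) * u$j))"
    by (simp add: inner_vec_def matrix_vector_mult_def sec_mom_def sum_distrib_left)
  also have "\<dots> = (\<integral>x. (\<Sum>i\<in>UNIV. \<Sum>j\<in>UNIV. u$i * ((x$i * x$j) * u$j)) \<partial>P)"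
    using sg_prod by (simp add: Bochner_Integration.integral_sum)
  also have "\<dots> = (\<integral>x. (u \<bullet> x)^2 \<partial>P)"
    by (simp add: inner_vec_def power2_eq_square sum_product mult_ac)
  also have "\<dots> \<ge> 0" by (intro integral_nonneg_AE) auto
  finally show ?thesis .
qed

lemma cf_le1: "cmod (\<integral>x. cis (u \<bullet> x) \<partial>P) \<le> 1"
proof -
  interpret prob_space P by (rule Pp)
  have "cmod (\<integral>x. cis (u \<bullet> x) \<partial>P) \<le> (\<integral>x. cmod (cis (u \<bullet> x)) \<partial>P)"
    by (rule integral_norm_bound)
  then show ?thesis by (simp add: prob_space)
qed

end


lemma cis_lip: "cmod (cis a - cis b) \<le> \<bar>a - b\<bar>"
proof -
  have "cis a - cis b = cis b * (cis (a - b) - 1)"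
    by (simp add: algebra_simps cis_mult)
  then have "cmod (cis a - cis b) = cmod (cis (a - b) - 1)" by (simp add: norm_mult)
  also have "\<dots> \<le> \<bar>a - b\<bar>"
    using iexp_approx1[of "a - b" 0] by (simp add: cis_conv_exp)
  finally show ?thesis .
qed

definition grid :: "real \<Rightarrow> real \<Rightarrow> (real^'k) set" where
  "grid R h = (\<lambda>z. \<chi> i. h * of_int (z i)) ` (Pi UNIV (\<lambda>_. {- int (nat \<lceil>R / h\<rceil> + 1) .. int (nat \<lceil>R / h\<rceil> + 1)}))"

lemma grid_finite: "finite (grid R h :: (real^'k) set)"
proof -
  have "finite (Pi\<^sub>E (UNIV::'k set) (\<lambda>_. {- int (nat \<lceil>R / h\<rceil> + 1) .. int (nat \<lceil>R / h\<rceil> + 1)}))"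
    by (intro finite_PiE) auto
  then show ?thesis unfolding grid_def PiE_UNIV_domain by simp
qed

lemma card_symm_int: "card {- int m .. int m} = 2 * m + 1"
  by simp

lemma grid_card: "card (grid R h :: (real^'k) set) \<le> (2 * (nat \<lceil>R / h\<rceil> + 1) + 1) ^ CARD('k)"
proof -
  let ?m = "int (nat \<lceil>R / h\<rceil> + 1)"
  have "card (grid R h :: (real^'k) set) \<le> card (Pi\<^sub>E (UNIV::'k set) (\<lambda>_. {- ?m .. ?m}))"
    unfolding grid_def PiE_UNIV_domain by (rule card_image_le) (simp add: finite_PiE flip: PiE_UNIV_domain)
  also have "\<dots> = (\<Prod>i\<in>(UNIV::'k set). card {- ?m .. ?m})" by (rule card_PiE) simp
  also have "\<dots> = (2 * (nat \<lceil>R / h\<rceil> + 1) + 1) ^ CARD('k)"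
    by (simp only: card_symm_int prod_constant card_UNIV)
  finally show ?thesis .
qed

lemma grid_approx:
  assumes h: "h > 0" and u: "norm (u::real^'k) \<le> R"
  shows "\<exists>g\<in>grid R h. norm (u - g) \<le> real CARD('k) * h"
proof -
  define z where "z i = \<lfloor>u$i / h\<rfloor>" for i
  define g :: "real^'k" where "g = (\<chi> i. h * of_int (z i))"
  have zb: "\<bar>z i\<bar> \<le> int (nat \<lceil>R / h\<rceil> + 1)" for i
  proof -
    have ui: "\<bar>u$i\<bar> \<le> R" using component_le_norm_cart[of u i] u by linarith
    then have "\<bar>u$i / h\<bar> \<le> R / h" using h by (simp add: abs_divide divide_right_mono)
    then have "- (R/h) \<le> u$i / h" "u$i / h \<le> R / h" by linarith+
    then have "- (R/h) - 1 < of_int (z i)" "of_int (z i) \<le> R / h"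
      unfolding z_def by linarith+
    moreover have "R / h \<le> of_int \<lceil>R / h\<rceil>" by (rule le_of_int_ceiling)
    moreover have "0 \<le> R / h" using ui h by auto
    ultimately show ?thesis by linarith
  qed
  have "z \<in> Pi UNIV (\<lambda>_. {- int (nat \<lceil>R / h\<rceil> + 1) .. int (nat \<lceil>R / h\<rceil> + 1)})"
    using zb by (simp add: abs_le_iff Pi_iff) (smt (verit))
  then have "g \<in> grid R h" unfolding grid_def g_def by (rule imageI)
  moreover have "norm (u - g) \<le> real CARD('k) * h"
  proof -
    have "norm (u - g) \<le> (\<Sum>i\<in>UNIV. \<bar>(u - g)$i\<bar>)" by (rule norm_le_l1_cart)
    also have "\<dots> \<le> (\<Sum>i\<in>(UNIV::'k set). h)"
    proof (intro sum_mono)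
      fix i
      have "of_int (z i) \<le> u$i / h" "u$i / h < of_int (z i) + 1" unfolding z_def by linarith+
      then have "h * of_int (z i) \<le> u$i" "u$i < h * of_int (z i) + h" using h by (simp_all add: field_simps)
      then show "\<bar>(u - g)$i\<bar> \<le> h" by (simp add: g_def)
    qed
    finally show ?thesis by simp
  qed
  ultimately show ?thesis by blast
qed


lemma one_le_2ln: "n \<ge> 2 \<Longrightarrow> 1 \<le> 2 * ln (real n)"
proof -
  assume n: "n \<ge> 2"
  have "2/3 \<le> ln (2::real)" by (rule ln2_ge_two_thirds)
  moreover have "ln 2 \<le> ln (real n)" using n by simp
  ultimately show ?thesis by linarith
qed

lemma ratio_bound:
  fixes \<alpha> \<beta> \<gamma> c Q Ct k :: real
  assumes pos: "\<alpha> \<ge> 0" "\<beta> \<ge> 0" "\<gamma> \<ge> 0" "c \<ge> 0" "Q \<ge> 0" "k \<ge> 0" and Ct: "Ct \<ge> 1"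
  shows "\<exists>B. \<forall>n\<ge>1. \<forall>y. 0 \<le> y \<and> y \<le> \<alpha> * sqrt ((k * ln (real n) + \<beta>) / real n) + \<gamma> / sqrt (real n)
     \<longrightarrow> \<bar>y / (c * sqrt (Q * ln (real n * Ct) / real n))\<bar> \<le> B"
proof -
  define C1 where "C1 = \<alpha> * sqrt (k + 2 * \<beta>) + \<gamma> * sqrt 2"
  define B0 where "B0 = C1 / (c * sqrt Q)"
  define B1 where "B1 = (\<alpha> * sqrt ((k * ln 1 + \<beta>) / 1) + \<gamma> / sqrt 1) / (c * sqrt (Q * ln (1 * Ct) / 1))"
  have C1: "C1 \<ge> 0" using pos by (simp add: C1_def)
  show ?thesis
  proof (intro exI[of _ "max B0 (\<bar>B1\<bar>)"] allI impI)
    fix n :: nat and y :: real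
    assume n: "n \<ge> 1" and y: "0 \<le> y \<and> y \<le> \<alpha> * sqrt ((k * ln (real n) + \<beta>) / real n) + \<gamma> / sqrt (real n)"
    define r where "r = c * sqrt (Q * ln (real n * Ct) / real n)"
    have "1 \<le> real n * Ct" using mult_mono[of 1 "real n" 1 Ct] n Ct by simp
    then have lnpos: "ln (real n * Ct) \<ge> 0" by simp
    have r0: "r \<ge> 0" unfolding r_def using pos lnpos n by simp
    show "\<bar>y / r\<bar> \<le> max B0 \<bar>B1\<bar>"
    proof (cases "r = 0")
      case True then show ?thesis by simp
    next
      case False
      then have rp: "r > 0" using r0 by simp
      have ay: "\<bar>y / r\<bar> = y / r" using y rp by simp
      show ?thesis
      proof (cases "n = 1")
        case True
        have "y / r \<le> (\<alpha> * sqrt ((k * ln 1 + \<beta>) / 1) + \<gamma> / sqrt 1) / r"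
          using y rp True by (intro divide_right_mono) auto
        also have "\<dots> = B1" unfolding B1_def r_def True by simp
        finally show ?thesis using ay by linarith
      next
        case False
        then have n2: "n \<ge> 2" using n by simp
        have l1: "1 \<le> 2 * ln (real n)" by (rule one_le_2ln[OF n2])
        have lnn: "ln (real n) \<le> ln (real n * Ct)" using n Ct
          by (subst ln_le_cancel_iff) (auto intro: mult_left_mono[of 1 Ct, simplified])
        have lp: "0 < ln (real n)" using l1 by linarith
        have np: "real n > 0" using n by simp
        define L where "L = sqrt (ln (real n * Ct) / real n)"
        have s1: "sqrt ((k * ln (real n) + \<beta>) / real n) \<le> sqrt (k + 2 * \<beta>) * L"
        proof -
          have "(k * ln (real n) + \<beta>) / real n \<le> ((k + 2 * \<beta>) * ln (real n * Ct)) / real n"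
          proof (intro divide_right_mono)
            have a1: "k * ln (real n) \<le> k * ln (real n * Ct)" using lnn pos(6) by (rule mult_left_mono)
            have "1 \<le> 2 * ln (real n * Ct)" using l1 lnn by linarith
            then have a2: "\<beta> * 1 \<le> \<beta> * (2 * ln (real n * Ct))" using pos(2) by (rule mult_left_mono)
            show "k * ln (real n) + \<beta> \<le> (k + 2 * \<beta>) * ln (real n * Ct)"
            proof -
              have e: "(k + 2*\<beta>) * x = k*x + \<beta>*(2*x)" for x by (simp add: algebra_simps)
              show ?thesis using a1 a2 e[of "ln (real n * Ct)"] by linarith
            qed
            show "0 \<le> real n" by simp
          qed
          then have "sqrt ((k * ln (real n) + \<beta>) / real n) \<le> sqrt ((k + 2 * \<beta>) * ln (real n * Ct) / real n)"
            by (rule real_sqrt_le_mono)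
          also have "sqrt ((k + 2 * \<beta>) * ln (real n * Ct) / real n) = sqrt (k + 2 * \<beta>) * L"
            unfolding L_def by (metis real_sqrt_mult times_divide_eq_right)
          finally show ?thesis .
        qed
        have s2: "1 / sqrt (real n) \<le> sqrt 2 * L"
        proof -
          have "1 / real n \<le> 2 * ln (real n * Ct) / real n"
            using l1 lnn np by (intro divide_right_mono) auto
          then have "sqrt (1 / real n) \<le> sqrt (2 * ln (real n * Ct) / real n)" by simp
          moreover have "sqrt (1 / real n) = 1 / sqrt (real n)" by (simp add: real_sqrt_divide)
          moreover have "sqrt (2 * ln (real n * Ct) / real n) = sqrt 2 * L"
            unfolding L_def by (metis real_sqrt_mult times_divide_eq_right)
          ultimately show ?thesis by simp
        qed
        have "y \<le> \<alpha> * (sqrt (k + 2 * \<beta>) * L) + \<gamma> * (sqrt 2 * L)"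
        proof -
          have "\<alpha> * sqrt ((k * ln (real n) + \<beta>) / real n) \<le> \<alpha> * (sqrt (k + 2 * \<beta>) * L)"
            using s1 pos(1) by (rule mult_left_mono)
          moreover have "\<gamma> * (1 / sqrt (real n)) \<le> \<gamma> * (sqrt 2 * L)"
            using s2 pos(3) by (rule mult_left_mono)
          ultimately show ?thesis using y by simp
        qed
        also have "\<dots> = C1 * L" by (simp add: C1_def algebra_simps)
        finally have yC: "y \<le> C1 * L" .
        have rL: "r = c * sqrt Q * L" unfolding r_def L_def by (metis real_sqrt_mult times_divide_eq_right mult.assoc)
        have L0: "L \<ge> 0" unfolding L_def using lnpos np by simp
        have cq0: "c * sqrt Q \<ge> 0" using pos by simp
        have "c * sqrt Q \<noteq> 0" "L \<noteq> 0" using rp rL by auto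
        then have cq: "c * sqrt Q > 0" and Lp: "L > 0" using L0 cq0 by linarith+
        have "y / r \<le> C1 * L / r" using yC rp by (intro divide_right_mono) auto
        also have "\<dots> = B0" unfolding B0_def rL using Lp cq by (simp add: field_simps)
        finally show ?thesis using ay by linarith
      qed
    qed
  qed
qed


lemma ecf_lip:
  "cmod ((1 / of_nat n) * (\<Sum>r<n. cis (u \<bullet> xs r)) - (1 / of_nat n) * (\<Sum>r<n. cis (g \<bullet> xs r)))
     \<le> norm (u - g) * ((1 / real n) * (\<Sum>r<n. norm (xs r)))"
proof -
  have "cmod ((1 / of_nat n) * (\<Sum>r<n. cis (u \<bullet> xs r)) - (1 / of_nat n) * (\<Sum>r<n. cis (g \<bullet> xs r)))
      = (1 / real n) * cmod (\<Sum>r<n. cis (u \<bullet> xs r) - cis (g \<bullet> xs r))"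
    by (simp only: right_diff_distrib[symmetric] sum_subtractf[symmetric] norm_mult) (simp add: norm_divide)
  also have "\<dots> \<le> (1 / real n) * (\<Sum>r<n. norm (u - g) * norm (xs r))"
  proof (intro mult_left_mono order_trans[OF norm_sum] sum_mono)
    fix r
    have "cmod (cis (u \<bullet> xs r) - cis (g \<bullet> xs r)) \<le> \<bar>u \<bullet> xs r - g \<bullet> xs r\<bar>" by (rule cis_lip)
    also have "\<dots> = \<bar>(u - g) \<bullet> xs r\<bar>" by (simp add: inner_diff_left)
    also have "\<dots> \<le> norm (u - g) * norm (xs r)" by (rule Cauchy_Schwarz_ineq2)
    finally show "cmod (cis (u \<bullet> xs r) - cis (g \<bullet> xs r)) \<le> norm (u - g) * norm (xs r)" .
  qed simp
  finally show ?thesis by (simp add: sum_distrib_left mult_ac)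
qed

lemma cf_lip:
  fixes P :: "(real^'k) measure"
  assumes Pp: "prob_space P" and sP: "sets P = sets borel" and ix: "integrable P (\<lambda>x. x)"
  shows "cmod ((\<integral>x. cis (u \<bullet> x) \<partial>P) - (\<integral>x. cis (g \<bullet> x) \<partial>P)) \<le> norm (u - g) * (\<integral>x. norm x \<partial>P)"
proof -
  interpret prob_space P by (rule Pp)
  have m[measurable]: "f \<in> borel_measurable P" if "f \<in> borel_measurable borel" for f :: "real^'k \<Rightarrow> 'b::topological_space"
    by (metis that measurable_cong_sets sP)
  have ic: "integrable P (\<lambda>x. cis (w \<bullet> x))" for w
    by (rule integrable_const_bound[where B=1]) auto
  have inorm: "integrable P (\<lambda>x. norm (u - g) * norm x)" using integrable_norm[OF ix] by auto
  have "cmod ((\<integral>x. cis (u \<bullet> x) \<partial>P) - (\<integral>x. cis (g \<bullet> x) \<partial>P)) = cmod (\<integral>x. cis (u \<bullet> x) - cis (g \<bullet> x) \<partial>P)"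
    using ic by (simp add: Bochner_Integration.integral_diff)
  also have "\<dots> \<le> (\<integral>x. cmod (cis (u \<bullet> x) - cis (g \<bullet> x)) \<partial>P)" by (rule integral_norm_bound)
  also have "\<dots> \<le> (\<integral>x. norm (u - g) * norm x \<partial>P)"
  proof (rule integral_mono)
    show "integrable P (\<lambda>x. cmod (cis (u \<bullet> x) - cis (g \<bullet> x)))" using ic by auto
    show "integrable P (\<lambda>x. norm (u - g) * norm x)" by (rule inorm)
    fix x
    have "cmod (cis (u \<bullet> x) - cis (g \<bullet> x)) \<le> \<bar>u \<bullet> x - g \<bullet> x\<bar>" by (rule cis_lip)
    also have "\<dots> = \<bar>(u - g) \<bullet> x\<bar>" by (simp add: inner_diff_left)
    also have "\<dots> \<le> norm (u - g) * norm x" by (rule Cauchy_Schwarz_ineq2)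
    finally show "cmod (cis (u \<bullet> x) - cis (g \<bullet> x)) \<le> norm (u - g) * norm x" .
  qed
  also have "\<dots> = norm (u - g) * (\<integral>x. norm x \<partial>P)" by simp
  finally show ?thesis .
qed


lemma tri3: "norm (a - d) \<le> norm (a - b) + norm (b - c) + norm (c - (d::'a::real_normed_vector))"
proof -
  have "a - d = (a - b) + ((b - c) + (c - d))" by simp
  then have "norm (a - d) \<le> norm (a - b) + norm ((b - c) + (c - d))" by (metis norm_triangle_ineq)
  also have "norm ((b - c) + (c - d)) \<le> norm (b - c) + norm (c - d)" by (rule norm_triangle_ineq)
  finally show ?thesis by simp
qed

context sett
begin

lemma good_event:
  fixes t :: "real^'k" and \<sigma> \<epsilon> :: real
  assumes ix: "integrable P (\<lambda>x. x)" and sg: "subgaussian P \<sigma>" and eps: "\<epsilon> > 0"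
  shows "\<exists>\<alpha> \<beta> \<gamma>. \<alpha> \<ge> 0 \<and> \<beta> \<ge> 0 \<and> \<gamma> \<ge> 0 \<and> (\<forall>n\<ge>1. \<exists>A\<in>sets M. measure M (space M - A) \<le> \<epsilon> \<and>
     (\<forall>\<omega>\<in>A. \<forall>F. onorm (\<lambda>v. F *v v) \<le> 1 \<longrightarrow>
        \<bar>Delta_pop P t F - Delta_emp (\<lambda>r. X r \<omega>) n t F\<bar>
          \<le> \<alpha> * sqrt ((real CARD('k) * ln (real n) + \<beta>) / real n) + \<gamma> / sqrt (real n)))"
proof -
  interpret Pp: prob_space P by (rule P_prob)
  define k where "k = real CARD('k)"
  define R where "R = norm t"
  define m1 where "m1 = (\<integral>x. norm x \<partial>P)"
  define cM where "cM = 3 * (m1 + 1) / \<epsilon>"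
  define V where "V i j = (\<integral>x. (x$i * x$j - (\<integral>x. x$i * x$j \<partial>P))^2 \<partial>P)" for i j :: 'k
  define Vt where "Vt = (\<Sum>i\<in>UNIV. \<Sum>j\<in>UNIV. V i j)"
  define K2 where "K2 = sqrt (3 * (Vt + 1) / \<epsilon>)"
  define L where "L = max 0 (ln (12 * (2 * R + 5) ^ CARD('k) / \<epsilon>))"
  define \<alpha> where "\<alpha> = 2 * (k + 1)"
  define \<beta> where "\<beta> = 2 * L"
  define \<gamma> where "\<gamma> = (k + 1) * (k * (m1 + cM) + R^2 * k^2 * K2)"
  have k0: "k \<ge> 0" by (simp add: k_def)
  have R0: "R \<ge> 0" by (simp add: R_def)
  have m10: "m1 \<ge> 0" unfolding m1_def by (intro integral_nonneg_AE) auto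
  have cM0: "cM > 0" using m10 eps by (simp add: cM_def)
  have V0: "V i j \<ge> 0" for i j unfolding V_def by (intro integral_nonneg_AE) auto
  have Vt0: "Vt \<ge> 0" unfolding Vt_def by (intro sum_nonneg V0)
  have K20: "K2 > 0" using Vt0 eps by (simp add: K2_def)
  have L0: "L \<ge> 0" by (simp add: L_def)
  show ?thesis
  proof (rule exI[of _ \<alpha>], rule exI[of _ \<beta>], rule exI[of _ \<gamma>], intro conjI allI impI)
    show "\<alpha> \<ge> 0" "\<beta> \<ge> 0" using k0 L0 by (auto simp: \<alpha>_def \<beta>_def)
    show "\<gamma> \<ge> 0" using k0 m10 cM0 R0 K20 by (auto simp: \<gamma>_def intro!: mult_nonneg_nonneg add_nonneg_nonneg)
    fix n :: nat assume n1: "n \<ge> 1"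
    have np: "real n > 0" using n1 by simp
    define h where "h = 1 / sqrt (real n)"
    define s where "s = sqrt ((k * ln (real n) + \<beta>) / real n)"
    define a where "a = K2 / sqrt (real n)"
    define \<Gamma> where "\<Gamma> = (grid R h :: (real^'k) set)"
    have h0: "h > 0" using np by (simp add: h_def)
    have a0: "a > 0" using np K20 by (simp add: a_def)
    have lnn0: "ln (real n) \<ge> 0" using n1 by simp
    have s0: "s \<ge> 0" unfolding s_def \<beta>_def using k0 L0 lnn0 np
      by (intro real_sqrt_ge_zero divide_nonneg_nonneg add_nonneg_nonneg mult_nonneg_nonneg) auto
    have s2: "s^2 = (k * ln (real n) + \<beta>) / real n"
      unfolding s_def using k0 L0 lnn0 np by (intro real_sqrt_pow2) (auto simp: \<beta>_def)
    define E1 where "E1 = (\<Union>g\<in>\<Gamma>. {\<omega>\<in>space M. cmod ((\<integral>x. cis (g \<bullet> x) \<partial>P) - (1 / of_nat n) * (\<Sum>r<n. cis (g \<bullet> X r \<omega>))) \<ge> 2 * s})"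
    define E2 where "E2 = {\<omega>\<in>space M. (1 / real n) * (\<Sum>r<n. norm (X r \<omega>)) \<ge> cM}"
    define E3 where "E3 = (\<Union>ij\<in>(UNIV::('k\<times>'k) set). {\<omega>\<in>space M. \<bar>(1 / real n) * (\<Sum>r<n. X r \<omega> $ fst ij * X r \<omega> $ snd ij) - (\<integral>x. x $ fst ij * x $ snd ij \<partial>P)\<bar> \<ge> a})"
    define A where "A = space M - (E1 \<union> E2 \<union> E3)"
    have fG: "finite \<Gamma>" unfolding \<Gamma>_def by (rule grid_finite)
    have E1s: "E1 \<in> sets M" unfolding E1_def using fG by (intro sets.finite_UN) auto
    have E2s: "E2 \<in> sets M" unfolding E2_def by measurable
    have gen: "{\<omega>\<in>space M. \<bar>(1 / real n) * (\<Sum>r<n. g (X r \<omega>)) - c\<bar> \<ge> a} \<in> sets M"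
      if [measurable]: "g \<in> borel_measurable borel" for g :: "real^'k \<Rightarrow> real" and c
      by measurable
    have E3ij: "{\<omega>\<in>space M. \<bar>(1 / real n) * (\<Sum>r<n. X r \<omega> $ fst ij * X r \<omega> $ snd ij) - (\<integral>x. x $ fst ij * x $ snd ij \<partial>P)\<bar> \<ge> a} \<in> sets M" for ij
      using gen[of "\<lambda>x. x $ fst ij * x $ snd ij"] by simp
    have E3s: "E3 \<in> sets M" unfolding E3_def using E3ij by (intro sets.finite_UN) auto
    have As: "A \<in> sets M" unfolding A_def using E1s E2s E3s by auto
    have sub: "E1 \<subseteq> space M" "E2 \<subseteq> space M" "E3 \<subseteq> space M"
      by (auto simp: E1_def E2_def E3_def)
    have P1: "measure M E1 \<le> \<epsilon> / 3"
    proof -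
      define q where "q = 4 * exp (- (real n * s^2 / 2))"
      define W where "W = 2 * R + 5"
      have W0: "W > 0" using R0 by (simp add: W_def)
      have sqn: "sqrt (real n) \<ge> 1" using n1 by simp
      have "measure M E1 \<le> (\<Sum>g\<in>\<Gamma>. measure M {\<omega>\<in>space M. cmod ((\<integral>x. cis (g \<bullet> x) \<partial>P) - (1 / of_nat n) * (\<Sum>r<n. cis (g \<bullet> X r \<omega>))) \<ge> 2 * s})"
        unfolding E1_def using fG by (intro finite_measure_subadditive_finite) auto
      also have "\<dots> \<le> (\<Sum>g\<in>\<Gamma>. q)"
        unfolding q_def using n1 s0 by (intro sum_mono hoeff_cis) auto
      also have "\<dots> = real (card \<Gamma>) * q" by simp
      also have "\<dots> \<le> (W * sqrt (real n)) ^ CARD('k) * q"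
      proof (intro mult_right_mono)
        show "q \<ge> 0" by (simp add: q_def)
        have c1: "card \<Gamma> \<le> (2 * (nat \<lceil>R / h\<rceil> + 1) + 1) ^ CARD('k)"
          unfolding \<Gamma>_def by (rule grid_card)
        have Rh: "R / h = R * sqrt (real n)" by (simp add: h_def)
        have c2: "real (nat \<lceil>R / h\<rceil>) \<le> R * sqrt (real n) + 1"
        proof -
          have "0 \<le> R / h" using R0 h0 by simp
          then have "real (nat \<lceil>R / h\<rceil>) = of_int \<lceil>R / h\<rceil>" by simp
          also have "\<dots> \<le> R / h + 1" by linarith
          finally show ?thesis using Rh by simp
        qed
        have c3: "real (2 * (nat \<lceil>R / h\<rceil> + 1) + 1) \<le> W * sqrt (real n)"
        proof -
          have "real (2 * (nat \<lceil>R / h\<rceil> + 1) + 1) \<le> 2 * (R * sqrt (real n) + 1) + 3"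
            using c2 by simp
          also have "\<dots> = 2 * R * sqrt (real n) + 5" by simp
          also have "\<dots> \<le> 2 * R * sqrt (real n) + 5 * sqrt (real n)" using sqn by simp
          also have "\<dots> = W * sqrt (real n)" by (simp add: W_def algebra_simps)
          finally show ?thesis .
        qed
        have "real (card \<Gamma>) \<le> real ((2 * (nat \<lceil>R / h\<rceil> + 1) + 1) ^ CARD('k))"
          using c1 by (simp only: of_nat_le_iff)
        also have "\<dots> = (real (2 * (nat \<lceil>R / h\<rceil> + 1) + 1)) ^ CARD('k)" by (rule of_nat_power)
        also have "\<dots> \<le> (W * sqrt (real n)) ^ CARD('k)"
          by (rule power_mono[OF c3]) simp
        finally show "real (card \<Gamma>) \<le> (W * sqrt (real n)) ^ CARD('k)" .
      qed
      also have "(W * sqrt (real n)) ^ CARD('k) * q = 4 * W ^ CARD('k) * exp (- L)"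
      proof -
        have "real n * s^2 / 2 = k * ln (real n) / 2 + L"
          using np by (simp add: s2 \<beta>_def field_simps)
        then have "exp (- (real n * s^2 / 2)) = exp (- L - k * ln (real n) / 2)"
          by (simp add: algebra_simps)
        also have "\<dots> = exp (- L) / exp (k * ln (real n) / 2)" by (rule exp_diff)
        also have "exp (k * ln (real n) / 2) = sqrt (real n) ^ CARD('k)"
        proof -
          have "k * ln (real n) / 2 = real CARD('k) * ln (sqrt (real n))"
            using np by (simp add: k_def ln_sqrt)
          then show ?thesis using np by (simp add: exp_of_nat_mult)
        qed
        finally have "q = 4 * exp (- L) / sqrt (real n) ^ CARD('k)" by (simp add: q_def)
        then show ?thesis using np by (simp add: power_mult_distrib field_simps)
      qed
      also have "\<dots> \<le> \<epsilon> / 3"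
      proof -
        define Z where "Z = 12 * W ^ CARD('k) / \<epsilon>"
        have Z0: "Z > 0" using W0 eps by (simp add: Z_def)
        have "ln Z \<le> L" by (simp add: L_def Z_def W_def)
        then have "Z \<le> exp L" using Z0 by (metis exp_ln exp_le_cancel_iff)
        then have "exp (- L) \<le> 1 / Z" using Z0 by (simp add: exp_minus field_simps)
        then have "4 * W ^ CARD('k) * exp (- L) \<le> 4 * W ^ CARD('k) * (1 / Z)"
          using W0 by (intro mult_left_mono) auto
        also have "\<dots> = \<epsilon> / 3" using W0 eps by (simp add: Z_def field_simps)
        finally show ?thesis .
      qed
      finally show ?thesis .
    qed
    have P2: "measure M E2 \<le> \<epsilon> / 3"
    proof -
      have "measure M E2 \<le> m1 / cM" unfolding E2_def m1_def using markov_norm[OF ix _ cM0, of n] n1 by simp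
      also have "\<dots> \<le> \<epsilon> / 3" unfolding cM_def using m10 eps by (simp add: field_simps)
      finally show ?thesis .
    qed
    have P3: "measure M E3 \<le> \<epsilon> / 3"
    proof -
      have "measure M E3 \<le> (\<Sum>ij\<in>(UNIV::('k\<times>'k) set). measure M {\<omega>\<in>space M. \<bar>(1 / real n) * (\<Sum>r<n. X r \<omega> $ fst ij * X r \<omega> $ snd ij) - (\<integral>x. x $ fst ij * x $ snd ij \<partial>P)\<bar> \<ge> a})"
        unfolding E3_def using E3ij by (intro finite_measure_subadditive_finite) auto
      also have "\<dots> \<le> (\<Sum>ij\<in>(UNIV::('k\<times>'k) set). V (fst ij) (snd ij) / (real n * a^2))"
      proof (rule sum_mono)
        fix ij :: "'k \<times> 'k"
        show "measure M {\<omega>\<in>space M. \<bar>(1 / real n) * (\<Sum>r<n. X r \<omega> $ fst ij * X r \<omega> $ snd ij) - (\<integral>x. x $ fst ij * x $ snd ij \<partial>P)\<bar> \<ge> a}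
            \<le> V (fst ij) (snd ij) / (real n * a^2)"
          unfolding V_def
          using cheb[of "\<lambda>x. x $ fst ij * x $ snd ij" n a] sg_prod2[OF P_prob sets_P sg] a0 n1 by simp
      qed
      also have "\<dots> = (\<Sum>ij\<in>(UNIV::('k\<times>'k) set). V (fst ij) (snd ij)) / K2^2"
        using np by (simp add: a_def sum_divide_distrib power_divide)
      also have "(\<Sum>ij\<in>(UNIV::('k\<times>'k) set). V (fst ij) (snd ij)) = Vt"
        unfolding Vt_def by (simp add: sum.cartesian_product case_prod_beta flip: UNIV_Times_UNIV)
      also have "K2^2 = 3 * (Vt + 1) / \<epsilon>" unfolding K2_def using Vt0 eps by simp
      also have "Vt / (3 * (Vt + 1) / \<epsilon>) \<le> \<epsilon> / 3" using Vt0 eps by (simp add: field_simps)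
      finally show ?thesis .
    qed
    have "measure M (space M - A) = measure M (E1 \<union> E2 \<union> E3)"
      using sub by (simp add: A_def Diff_Diff_Int Int_absorb1)
    also have "\<dots> \<le> measure M E1 + measure M E2 + measure M E3"
      using E1s E2s E3s by (meson add_mono_thms_linordered_semiring(3) measure_Un_le sets.Un order_trans)
    also have "\<dots> \<le> \<epsilon>" using P1 P2 P3 by simp
    finally have PA: "measure M (space M - A) \<le> \<epsilon>" .
    have good: "\<bar>Delta_pop P t F - Delta_emp (\<lambda>r. X r \<omega>) n t F\<bar>
          \<le> \<alpha> * sqrt ((real CARD('k) * ln (real n) + \<beta>) / real n) + \<gamma> / sqrt (real n)"
      if om: "\<omega> \<in> A" and F: "onorm (\<lambda>v. F *v v) \<le> 1" for \<omega> F
    proof -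
      have oM: "\<omega> \<in> space M" and n1': "\<omega> \<notin> E1" and n2: "\<omega> \<notin> E2" and n3: "\<omega> \<notin> E3"
        using om by (auto simp: A_def)
      define Mh where "Mh = (1 / real n) * (\<Sum>r<n. norm (X r \<omega>))"
      have Mh: "Mh \<le> cM" using n2 oM by (auto simp: E2_def Mh_def)
      have Mh0: "Mh \<ge> 0" unfolding Mh_def by (simp add: sum_nonneg)
      have D: "cmod ((\<integral>x. cis (u \<bullet> x) \<partial>P) - (1 / of_nat n) * (\<Sum>r<n. cis (u \<bullet> X r \<omega>)))
          \<le> 2 * s + k * h * (m1 + cM)" if u: "norm u \<le> norm t" for u
      proof -
        obtain g where g: "g \<in> \<Gamma>" and ug: "norm (u - g) \<le> k * h"
          using grid_approx[OF h0, of u R] u unfolding \<Gamma>_def R_def k_def by auto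
        have d1: "cmod ((\<integral>x. cis (u \<bullet> x) \<partial>P) - (\<integral>x. cis (g \<bullet> x) \<partial>P)) \<le> k * h * m1"
          using cf_lip[OF P_prob sets_P ix, of u g] ug m10 unfolding m1_def[symmetric]
          by (meson mult_right_mono order_trans)
        have d2: "cmod ((\<integral>x. cis (g \<bullet> x) \<partial>P) - (1 / of_nat n) * (\<Sum>r<n. cis (g \<bullet> X r \<omega>))) \<le> 2 * s"
          using n1' oM g unfolding E1_def by auto
        have d3: "cmod ((1 / of_nat n) * (\<Sum>r<n. cis (g \<bullet> X r \<omega>)) - (1 / of_nat n) * (\<Sum>r<n. cis (u \<bullet> X r \<omega>))) \<le> k * h * cM"
        proof -
          have "cmod ((1 / of_nat n) * (\<Sum>r<n. cis (g \<bullet> X r \<omega>)) - (1 / of_nat n) * (\<Sum>r<n. cis (u \<bullet> X r \<omega>)))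
              \<le> norm (g - u) * Mh" unfolding Mh_def by (rule ecf_lip)
          also have "\<dots> \<le> (k * h) * cM" using ug Mh Mh0 k0 h0 by (intro mult_mono) (auto simp: norm_minus_commute)
          finally show ?thesis by simp
        qed
        have "cmod ((\<integral>x. cis (u \<bullet> x) \<partial>P) - (1 / of_nat n) * (\<Sum>r<n. cis (u \<bullet> X r \<omega>)))
          \<le> cmod ((\<integral>x. cis (u \<bullet> x) \<partial>P) - (\<integral>x. cis (g \<bullet> x) \<partial>P))
           + cmod ((\<integral>x. cis (g \<bullet> x) \<partial>P) - (1 / of_nat n) * (\<Sum>r<n. cis (g \<bullet> X r \<omega>)))
           + cmod ((1 / of_nat n) * (\<Sum>r<n. cis (g \<bullet> X r \<omega>)) - (1 / of_nat n) * (\<Sum>r<n. cis (u \<bullet> X r \<omega>)))"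
          by (rule tri3)
        also have "\<dots> \<le> k * h * m1 + 2 * s + k * h * cM" using d1 d2 d3 by linarith
        finally show ?thesis by (simp add: algebra_simps)
      qed
      have Eb: "(\<Sum>i\<in>UNIV. \<Sum>j\<in>UNIV. \<bar>sec_mom P $i$j - emp_sec_mom (\<lambda>r. X r \<omega>) n $i$j\<bar>) \<le> k^2 * a"
      proof -
        have "(\<Sum>i\<in>UNIV. \<Sum>j\<in>UNIV. \<bar>sec_mom P $i$j - emp_sec_mom (\<lambda>r. X r \<omega>) n $i$j\<bar>) \<le> (\<Sum>i\<in>(UNIV::'k set). \<Sum>j\<in>(UNIV::'k set). a)"
        proof (intro sum_mono)
          fix i j :: 'k
          have "\<omega> \<notin> {\<omega>\<in>space M. \<bar>(1 / real n) * (\<Sum>r<n. X r \<omega> $ fst (i,j) * X r \<omega> $ snd (i,j)) - (\<integral>x. x $ fst (i,j) * x $ snd (i,j) \<partial>P)\<bar> \<ge> a}"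
            using n3 unfolding E3_def by blast
          then show "\<bar>sec_mom P $i$j - emp_sec_mom (\<lambda>r. X r \<omega>) n $i$j\<bar> \<le> a"
            using oM by (simp add: sec_mom_def emp_sec_mom_def abs_minus_commute)
        qed
        also have "\<dots> = k^2 * a" by (simp add: k_def power2_eq_square)
        finally show ?thesis .
      qed
      have "\<bar>Delta_pop P t F - Delta_emp (\<lambda>r. X r \<omega>) n t F\<bar>
          \<le> (real CARD('k) + 1) * ((2 * s + k * h * (m1 + cM)) + norm t ^ 2 * (k^2 * a))"
        by (rule det_bound[OF F sec_psd[OF P_prob sets_P sg] cf_le1[OF P_prob sets_P sg] D Eb])
      also have "\<dots> = \<alpha> * s + \<gamma> * h"
      proof -
        have ah: "a = K2 * h" by (simp add: a_def h_def)
        show ?thesis by (simp add: \<alpha>_def \<gamma>_def k_def R_def ah algebra_simps)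
      qed
      finally show ?thesis by (simp add: s_def h_def k_def)
    qed
    show "\<exists>A\<in>sets M. measure M (space M - A) \<le> \<epsilon> \<and>
     (\<forall>\<omega>\<in>A. \<forall>F. onorm (\<lambda>v. F *v v) \<le> 1 \<longrightarrow>
        \<bar>Delta_pop P t F - Delta_emp (\<lambda>r. X r \<omega>) n t F\<bar>
          \<le> \<alpha> * sqrt ((real CARD('k) * ln (real n) + \<beta>) / real n) + \<gamma> / sqrt (real n))"
      using As PA good by blast
  qed
qed

end


theorem theoremA3:
  fixes M :: "'a measure" and X :: "nat \<Rightarrow> 'a \<Rightarrow> real^'k"
    and P :: "(real^'k) measure" and \<sigma> :: real and t :: "real^'k"
  assumes "prob_space M"
    and "\<And>r. X r \<in> borel_measurable M"
    and "prob_space.indep_vars M (\<lambda>_. borel) X UNIV"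
    and "\<And>r. distr M borel (X r) = P"
    and "integrable P (\<lambda>x. x)" and "(\<integral>x. x \<partial>P) = 0"
    and "subgaussian P \<sigma>"
  shows "\<forall>\<epsilon>>0. \<exists>B. \<forall>n\<ge>1. \<exists>A\<in>sets M. measure M (space M - A) \<le> \<epsilon> \<and>
           (\<forall>\<omega>\<in>A. \<bar>(SUP F\<in>{F::real^'k^'k. onorm (\<lambda>v. F *v v) \<le> 1}.
                        \<bar>Delta_pop P t F - Delta_emp (\<lambda>r. X r \<omega>) n t F\<bar>)
                     / rateA3 P \<sigma> t n\<bar> \<le> B)"
proof (intro allI impI)
  fix \<epsilon> :: real assume eps: "\<epsilon> > 0"
  interpret sett M X P
    by (intro sett.intro sett_axioms.intro assms(1,2,3,4))
  obtain \<alpha> \<beta> \<gamma> where pos: "\<alpha> \<ge> 0" "\<beta> \<ge> 0" "\<gamma> \<ge> 0" and ge: "\<forall>n\<ge>1. \<exists>A\<in>sets M. measure M (space M - A) \<le> \<epsilon> \<and>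
     (\<forall>\<omega>\<in>A. \<forall>F. onorm (\<lambda>v. F *v v) \<le> 1 \<longrightarrow>
        \<bar>Delta_pop P t F - Delta_emp (\<lambda>r. X r \<omega>) n t F\<bar>
          \<le> \<alpha> * sqrt ((real CARD('k) * ln (real n) + \<beta>) / real n) + \<gamma> / sqrt (real n))"
    using good_event[OF assms(5) assms(7) eps, of t] by blast
  define nS where "nS = onorm (\<lambda>v. sec_mom P *v v)"
  define kk where "kk = real CARD('k)"
  define Q where "Q = kk * nS * max kk (\<sigma>^4 * nS)"
  define Ct where "Ct = max 1 ((norm t)^2 * trace (sec_mom P))"
  have nS0: "nS \<ge> 0" unfolding nS_def by (intro onorm_pos_le) simp
  have Q0: "Q \<ge> 0" unfolding Q_def kk_def using nS0 by (intro mult_nonneg_nonneg) auto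
  have Ct1: "Ct \<ge> 1" by (simp add: Ct_def)
  have kk0: "kk \<ge> 0" by (simp add: kk_def)
  have rate: "rateA3 P \<sigma> t n = norm t * sqrt (Q * ln (real n * Ct) / real n)" for n
    unfolding rateA3_def Let_def Q_def nS_def kk_def Ct_def by (rule refl)
  obtain B where B: "\<forall>n\<ge>1. \<forall>y. 0 \<le> y \<and> y \<le> \<alpha> * sqrt ((kk * ln (real n) + \<beta>) / real n) + \<gamma> / sqrt (real n)
     \<longrightarrow> \<bar>y / (norm t * sqrt (Q * ln (real n * Ct) / real n))\<bar> \<le> B"
    using ratio_bound[OF pos(1) pos(2) pos(3) norm_ge_zero[of t] Q0 kk0 Ct1] by blast
  show "\<exists>B. \<forall>n\<ge>1. \<exists>A\<in>sets M. measure M (space M - A) \<le> \<epsilon> \<and>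
           (\<forall>\<omega>\<in>A. \<bar>(SUP F\<in>{F::real^'k^'k. onorm (\<lambda>v. F *v v) \<le> 1}.
                        \<bar>Delta_pop P t F - Delta_emp (\<lambda>r. X r \<omega>) n t F\<bar>)
                     / rateA3 P \<sigma> t n\<bar> \<le> B)"
  proof (intro exI[of _ B] allI impI)
    fix n :: nat assume n1: "n \<ge> 1"
    obtain A where A: "A \<in> sets M" "measure M (space M - A) \<le> \<epsilon>" and
      Ag: "\<forall>\<omega>\<in>A. \<forall>F. onorm (\<lambda>v. F *v v) \<le> 1 \<longrightarrow>
        \<bar>Delta_pop P t F - Delta_emp (\<lambda>r. X r \<omega>) n t F\<bar>
          \<le> \<alpha> * sqrt ((real CARD('k) * ln (real n) + \<beta>) / real n) + \<gamma> / sqrt (real n)"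
      using ge n1 by blast
    show "\<exists>A\<in>sets M. measure M (space M - A) \<le> \<epsilon> \<and>
           (\<forall>\<omega>\<in>A. \<bar>(SUP F\<in>{F::real^'k^'k. onorm (\<lambda>v. F *v v) \<le> 1}.
                        \<bar>Delta_pop P t F - Delta_emp (\<lambda>r. X r \<omega>) n t F\<bar>)
                     / rateA3 P \<sigma> t n\<bar> \<le> B)"
    proof (intro bexI[OF _ A(1)] conjI A(2) ballI)
      fix \<omega> assume om: "\<omega> \<in> A"
      define N where "N = \<alpha> * sqrt ((real CARD('k) * ln (real n) + \<beta>) / real n) + \<gamma> / sqrt (real n)"
      define SF where "SF = {F::real^'k^'k. onorm (\<lambda>v. F *v v) \<le> 1}"
      define y where "y = (SUP F\<in>SF. \<bar>Delta_pop P t F - Delta_emp (\<lambda>r. X r \<omega>) n t F\<bar>)"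
      have bnd: "\<bar>Delta_pop P t F - Delta_emp (\<lambda>r. X r \<omega>) n t F\<bar> \<le> N" if "F \<in> SF" for F
        using Ag om that by (auto simp: N_def SF_def)
      have z: "(0::real^'k^'k) \<in> SF"
      proof -
        have h: "(\<lambda>v. (0::real^'k^'k) *v v) = (\<lambda>v. 0)" by (simp add: fun_eq_iff)
        have h2: "(*v) (0::real^'k^'k) = (\<lambda>v. 0)" by (rule ext) simp
        have "onorm (\<lambda>v. (0::real^'k^'k) *v v) = 0" by (subst h) (rule onorm_zero)
        moreover have "onorm ((*v) (0::real^'k^'k)) = 0" by (subst h2) (rule onorm_zero)
        ultimately show ?thesis by (simp add: SF_def)
      qed
      have bdd: "bdd_above ((\<lambda>F. \<bar>Delta_pop P t F - Delta_emp (\<lambda>r. X r \<omega>) n t F\<bar>) ` SF)"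
        using bnd by (intro bdd_aboveI2) auto
      have y1: "y \<le> N" unfolding y_def using z bnd by (intro cSUP_least) auto
      have y0: "0 \<le> y"
      proof -
        have "\<bar>Delta_pop P t 0 - Delta_emp (\<lambda>r. X r \<omega>) n t 0\<bar> \<le> y"
          unfolding y_def by (rule cSUP_upper[OF z bdd])
        then show ?thesis by linarith
      qed
      have "\<bar>y / (norm t * sqrt (Q * ln (real n * Ct) / real n))\<bar> \<le> B"
      proof -
        have "0 \<le> y \<and> y \<le> \<alpha> * sqrt ((kk * ln (real n) + \<beta>) / real n) + \<gamma> / sqrt (real n)"
          using y0 y1 unfolding N_def kk_def by blast
        then show ?thesis using B n1 by blast
      qed
      then show "\<bar>(SUP F\<in>{F::real^'k^'k. onorm (\<lambda>v. F *v v) \<le> 1}.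
                        \<bar>Delta_pop P t F - Delta_emp (\<lambda>r. X r \<omega>) n t F\<bar>)
                     / rateA3 P \<sigma> t n\<bar> \<le> B"
        by (simp add: rate y_def SF_def)
    qed
  qed
qed


end
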